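(* The class of finite linear orders has the Rank Property: for every countable ordinal $\alpha$ there is a countable linear order $X$ with $\mathsf{rk}(X)=\alpha$.
   Context: Let $\mathcal F$ be the class of finite linear orders (language $\{<\}$); countable linear orders are the structures considered; substructures are suborders and $\mathsf{age}(X)$ is the set of finite suborders of $X$. For $A\le B$, $B$ is a prime extension of $A$ if $|B\setminus A|=1$; a realization of $B$ in $X$ (where $A\le X$) is $C\le X$ with $A\le C$ and an order-isomorphism $B\to C$ fixing $A$ pointwise. For $F\in\mathsf{age}(X)$ define by recursion: $\mathsf{rk}_X(F)\ge0$ always; $\mathsf{rk}_X(F)\ge\alpha+1$ iff every prime extension $B\in\mathcal F$ of $F$ has a realization $C$ in $X$ with $\mathsf{rk}_X(C)\ge\alpha$; for limit $\alpha$, $\mathsf{rk}_X(F)\ge\alpha$ iff $\mathsf{rk}_X(F)\ge\beta$ for all $\beta<\alpha$. $\mathsf{rk}_X(F)=\sup\{\alpha:\mathsf{rk}_X(F)\ge\alpha\}$ (or $\infty$ if this holds for all ordinals), and $\mathsf{rk}(X)=\mathsf{rk}_X(\emptyset)$. *)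

theory Defs
  imports Main "HOL-Library.Countable_Set"
begin

text \<open>A countable linear order X is represented by a (reflexive) linear order relation
  L on a subset of nat (carrier Field L). Finite suborders of X are finite subsets
  F of Field L with the restricted order.\<close>

definition prime_ext :: "nat rel \<Rightarrow> nat set \<Rightarrow> nat rel \<Rightarrow> bool" where
  "prime_ext L F B \<longleftrightarrow> Linear_order B \<and> finite (Field B) \<and> F \<subseteq> Field B \<and>
     card (Field B - F) = 1 \<and> (\<forall>x\<in>F. \<forall>y\<in>F. (x, y) \<in> B \<longleftrightarrow> (x, y) \<in> L)"

definition realization :: "nat rel \<Rightarrow> nat set \<Rightarrow> nat rel \<Rightarrow> nat set \<Rightarrow> bool" where
  "realization L F B C \<longleftrightarrow> F \<subseteq> C \<and> C \<subseteq> Field L \<and>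
     (\<exists>g. bij_betw g (Field B) C \<and> (\<forall>x\<in>F. g x = x) \<and>
          (\<forall>x\<in>Field B. \<forall>y\<in>Field B. (x, y) \<in> B \<longleftrightarrow> (g x, g y) \<in> L))"

text \<open>Ordinals are represented by elements a of a well-order W (the ordinal being the
  order type of the strict initial segment below a). rk_ge W L a F means rk_X(F) \<ge> a,
  defined by transfinite recursion: zero / successor / limit case.\<close>
definition is_pred :: "'w rel \<Rightarrow> 'w \<Rightarrow> 'w \<Rightarrow> bool" where
  "is_pred W b a \<longleftrightarrow> (b, a) \<in> W \<and> b \<noteq> a \<and>
     \<not> (\<exists>c. (b, c) \<in> W \<and> (c, a) \<in> W \<and> c \<noteq> b \<and> c \<noteq> a)"

definition rk_ge :: "'w rel \<Rightarrow> nat rel \<Rightarrow> 'w \<Rightarrow> nat set \<Rightarrow> bool" where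
  "rk_ge W L = wfrec (W - Id) (\<lambda>g a F.
     if \<not> (\<exists>b. (b, a) \<in> W \<and> b \<noteq> a) then True
     else if (\<exists>b. is_pred W b a) then
       (\<forall>B. prime_ext L F B \<longrightarrow> (\<exists>C. realization L F B C \<and> g (THE b. is_pred W b a) C))
     else (\<forall>b. (b, a) \<in> W \<and> b \<noteq> a \<longrightarrow> g b F))"

text \<open>Extension of a well-order r (ordinal alpha) by two new top elements
  Inr False (representing alpha) < Inr True (representing alpha+1).\<close>
definition ext2 :: "'a rel \<Rightarrow> ('a + bool) rel" where
  "ext2 r = {(Inl x, Inl y) | x y. (x, y) \<in> r} \<union> {(Inl x, Inr b) | x b. x \<in> Field r}
     \<union> {(Inr False, Inr False), (Inr False, Inr True), (Inr True, Inr True)}"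

text \<open>rk(X) = alpha, where alpha is the order type of the well-order r:
  rk_X(\<emptyset>) \<ge> alpha and not rk_X(\<emptyset>) \<ge> alpha+1.\<close>
definition rank_eq :: "nat rel \<Rightarrow> 'a rel \<Rightarrow> bool" where
  "rank_eq L r \<longleftrightarrow> rk_ge (ext2 r) L (Inr False) {} \<and> \<not> rk_ge (ext2 r) L (Inr True) {}"

end

theory Submission
  imports Defs
begin


section \<open>Well-order facts\<close>

locale WO = fixes W :: "'w rel" assumes wo: "Well_order W"
begin

lemma wf: "wf (W - Id)"
  using wo by (simp add: well_order_on_def)

lemma lin: "Linear_order W"
  using wo by (simp add: well_order_on_def)

lemma trans: "trans W"
  using lin by (simp add: linear_order_on_def partial_order_on_def preorder_on_def)

lemma antisym: "antisym W"
  using lin by (simp add: linear_order_on_def partial_order_on_def)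

lemma total: "x \<in> Field W \<Longrightarrow> y \<in> Field W \<Longrightarrow> x \<noteq> y \<Longrightarrow> (x,y) \<in> W \<or> (y,x) \<in> W"
  using lin by (simp add: linear_order_on_def total_on_def)

lemma inF1: "(x,y) \<in> W \<Longrightarrow> x \<in> Field W" by (simp add: FieldI1)
lemma inF2: "(x,y) \<in> W \<Longrightarrow> y \<in> Field W" by (simp add: FieldI2)

lemma transW: "(x,y) \<in> W \<Longrightarrow> (y,z) \<in> W \<Longrightarrow> (x,z) \<in> W"
  using trans by (meson transD)

lemma antiW: "(x,y) \<in> W \<Longrightarrow> (y,x) \<in> W \<Longrightarrow> x = y"
  using antisym by (meson antisymD)

lemma refl: "x \<in> Field W \<Longrightarrow> (x,x) \<in> W"
  using lin by (simp add: linear_order_on_def partial_order_on_def preorder_on_def refl_on_def)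

lemma pred_unique: "is_pred W b a \<Longrightarrow> is_pred W b' a \<Longrightarrow> b = b'"
  unfolding is_pred_def by (metis inF1 total)

lemma the_pred: "is_pred W b a \<Longrightarrow> (THE b. is_pred W b a) = b"
  using pred_unique by blast

lemma below_pred: "is_pred W p a \<Longrightarrow> (b,a) \<in> W \<Longrightarrow> b \<noteq> a \<Longrightarrow> (b,p) \<in> W"
proof (cases "b = p")
  case True
  assume "is_pred W p a"
  then show ?thesis using True refl inF1 unfolding is_pred_def by blast
next
  case False
  assume h: "is_pred W p a" "(b,a) \<in> W" "b \<noteq> a"
  have "p \<in> Field W" "b \<in> Field W" using h inF1 unfolding is_pred_def by auto
  then have "(b,p) \<in> W \<or> (p,b) \<in> W" using total False by blast
  moreover have "(p,b) \<notin> W" using h False unfolding is_pred_def by auto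
  ultimately show ?thesis by blast
qed

lemma succ_ex: assumes "(g,a) \<in> W" "g \<noteq> a" shows "\<exists>s. is_pred W g s \<and> (s,a) \<in> W"
proof -
  let ?Q = "{x. (g,x) \<in> W \<and> x \<noteq> g}"
  have "a \<in> ?Q" using assms by auto
  then obtain s where s: "s \<in> ?Q" and min: "\<And>y. (y,s) \<in> W - Id \<Longrightarrow> y \<notin> ?Q"
    using wfE_min[OF wf \<open>a \<in> ?Q\<close>] by blast
  have "is_pred W g s" unfolding is_pred_def
  proof (intro conjI)
    show "(g,s) \<in> W" "g \<noteq> s" using s by auto
    show "\<not> (\<exists>c. (g, c) \<in> W \<and> (c, s) \<in> W \<and> c \<noteq> g \<and> c \<noteq> s)" using min by auto
  qed
  moreover have "(s,a) \<in> W"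
  proof (rule ccontr)
    assume "(s,a) \<notin> W"
    moreover have "s \<in> Field W" "a \<in> Field W" using s assms inF2 by auto
    ultimately have "a \<noteq> s" using refl by auto
    hence "(a,s) \<in> W" using total[of s a] \<open>(s,a) \<notin> W\<close> \<open>s \<in> Field W\<close> \<open>a \<in> Field W\<close> by auto
    note this \<open>a \<noteq> s\<close>
    thus False using min[of a] \<open>a \<noteq> s\<close> \<open>a \<in> ?Q\<close> by auto
  qed
  ultimately show ?thesis by blast
qed

end

definition lowr :: "'b rel \<Rightarrow> 'b set \<Rightarrow> 'b \<Rightarrow> 'b set" where
  "lowr R S c = {x\<in>S. (x,c) \<in> R \<and> x \<noteq> c}"
definition uppr :: "'b rel \<Rightarrow> 'b set \<Rightarrow> 'b \<Rightarrow> 'b set" where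
  "uppr R S c = {x\<in>S. (c,x) \<in> R \<and> x \<noteq> c}"

definition rho :: "'w rel \<Rightarrow> 'b rel \<Rightarrow> 'w \<Rightarrow> 'b set \<Rightarrow> bool" where
  "rho W R = wfrec (W - Id) (\<lambda>g a S.
     if \<not> (\<exists>b. (b, a) \<in> W \<and> b \<noteq> a) then True
     else if (\<exists>b. is_pred W b a) then
       (\<exists>c\<in>S. g (THE b. is_pred W b a) (lowr R S c) \<and> g (THE b. is_pred W b a) (uppr R S c))
     else (\<forall>b. (b, a) \<in> W \<and> b \<noteq> a \<longrightarrow> g b S))"

context WO begin

lemma rk_zero: "\<not> (\<exists>b. (b, a) \<in> W \<and> b \<noteq> a) \<Longrightarrow> rk_ge W L a F"
  unfolding rk_ge_def by (subst wfrec[OF wf]) simp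

lemma rk_succ: assumes "is_pred W b a"
  shows "rk_ge W L a F \<longleftrightarrow> (\<forall>B. prime_ext L F B \<longrightarrow> (\<exists>C. realization L F B C \<and> rk_ge W L b C))"
proof -
  have b: "(b,a) \<in> W - Id" using assms unfolding is_pred_def by auto
  have e1: "\<exists>b. (b, a) \<in> W \<and> b \<noteq> a" "\<exists>b. is_pred W b a" using assms b by auto
  show ?thesis unfolding rk_ge_def
    apply (subst wfrec[OF wf])
    apply (simp only: e1 if_True if_False not_True_eq_False the_pred[OF assms] cut_apply[OF b])
    done
qed

lemma rk_lim: assumes "\<exists>b. (b, a) \<in> W \<and> b \<noteq> a" "\<not> (\<exists>b. is_pred W b a)"
  shows "rk_ge W L a F \<longleftrightarrow> (\<forall>b. (b, a) \<in> W \<and> b \<noteq> a \<longrightarrow> rk_ge W L b F)"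
  unfolding rk_ge_def
  apply (subst wfrec[OF wf])
  using assms by (auto simp: cut_apply)

lemma rho_zero: "\<not> (\<exists>b. (b, a) \<in> W \<and> b \<noteq> a) \<Longrightarrow> rho W R a S"
  unfolding rho_def by (subst wfrec[OF wf]) simp

lemma rho_succ: assumes "is_pred W b a"
  shows "rho W R a S \<longleftrightarrow> (\<exists>c\<in>S. rho W R b (lowr R S c) \<and> rho W R b (uppr R S c))"
proof -
  have b: "(b,a) \<in> W - Id" using assms unfolding is_pred_def by auto
  have e1: "\<exists>b. (b, a) \<in> W \<and> b \<noteq> a" "\<exists>b. is_pred W b a" using assms b by auto
  show ?thesis unfolding rho_def
    apply (subst wfrec[OF wf])
    apply (simp only: e1 if_True if_False not_True_eq_False the_pred[OF assms] cut_apply[OF b])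
    done
qed

lemma rho_lim: assumes "\<exists>b. (b, a) \<in> W \<and> b \<noteq> a" "\<not> (\<exists>b. is_pred W b a)"
  shows "rho W R a S \<longleftrightarrow> (\<forall>b. (b, a) \<in> W \<and> b \<noteq> a \<longrightarrow> rho W R b S)"
  unfolding rho_def
  apply (subst wfrec[OF wf])
  using assms by (auto simp: cut_apply)

lemma rho_mono_set: "rho W R a S \<Longrightarrow> S \<subseteq> S' \<Longrightarrow> rho W R a S'"
proof (induction a arbitrary: S S' rule: wf_induct[OF wf])
  case (1 a)
  show ?case
  proof (cases "\<exists>b. (b, a) \<in> W \<and> b \<noteq> a")
    case False then show ?thesis by (rule rho_zero)
  next
    case True
    show ?thesis
    proof (cases "\<exists>b. is_pred W b a")
      case True
      then obtain b where b: "is_pred W b a" by blast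
      then have bW: "(b,a) \<in> W - Id" unfolding is_pred_def by auto
      have "\<exists>c\<in>S. rho W R b (lowr R S c) \<and> rho W R b (uppr R S c)"
        using rho_succ[OF b, THEN iffD1, OF "1.prems"(1)] .
      then obtain c where c: "c \<in> S" "rho W R b (lowr R S c)" "rho W R b (uppr R S c)" by blast
      have "lowr R S c \<subseteq> lowr R S' c" "uppr R S c \<subseteq> uppr R S' c"
        using "1.prems"(2) unfolding lowr_def uppr_def by auto
      then have "rho W R b (lowr R S' c)" "rho W R b (uppr R S' c)"
        using "1.IH"[rule_format, OF bW] c by blast+
      moreover have "c \<in> S'" using c(1) "1.prems"(2) by blast
      ultimately show ?thesis using rho_succ[OF b, of R S'] by blast
    next
      case False
      have "\<forall>b. (b, a) \<in> W \<and> b \<noteq> a \<longrightarrow> rho W R b S"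
        using rho_lim[OF \<open>\<exists>b. _\<close> False, of R S] "1.prems"(1) by blast
      then have "\<forall>b. (b, a) \<in> W \<and> b \<noteq> a \<longrightarrow> rho W R b S'"
        using "1.IH" "1.prems"(2) by blast
      then show ?thesis using rho_lim[OF \<open>\<exists>b. _\<close> False, of R S'] by blast
    qed
  qed
qed

lemma rho_mono_ord: "rho W R a S \<Longrightarrow> (b,a) \<in> W \<Longrightarrow> rho W R b S"
proof (induction a arbitrary: b S rule: wf_induct[OF wf])
  case (1 a)
  show ?case
  proof (cases "b = a")
    case True then show ?thesis using "1.prems" by simp
  next
    case ne: False
    then have ex: "\<exists>b. (b, a) \<in> W \<and> b \<noteq> a" using "1.prems" by blast
    show ?thesis
    proof (cases "\<exists>b. is_pred W b a")
      case True
      then obtain p where p: "is_pred W p a" by blast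
      then have pW: "(p,a) \<in> W - Id" unfolding is_pred_def by auto
      have "\<exists>c\<in>S. rho W R p (lowr R S c) \<and> rho W R p (uppr R S c)"
        using rho_succ[OF p, THEN iffD1, OF "1.prems"(1)] .
      then obtain c where c: "c \<in> S" "rho W R p (lowr R S c)" by blast
      have bp: "(b,p) \<in> W" using below_pred[OF p "1.prems"(2) ne] .
      have "rho W R b (lowr R S c)" using "1.IH"[rule_format, OF pW c(2) bp] .
      then show ?thesis using rho_mono_set[of R b "lowr R S c" S] unfolding lowr_def by blast
    next
      case False
      have "\<forall>b. (b, a) \<in> W \<and> b \<noteq> a \<longrightarrow> rho W R b S"
        using rho_lim[OF ex False, THEN iffD1, OF "1.prems"(1)] .
      then show ?thesis using "1.prems"(2) ne by blast
    qed
  qed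
qed

lemma rho_key: assumes "(g,a) \<in> W" "g \<noteq> a" "rho W R a S"
  shows "\<exists>c\<in>S. rho W R g (lowr R S c) \<and> rho W R g (uppr R S c)"
proof -
  obtain s where s: "is_pred W g s" "(s,a) \<in> W" using succ_ex[OF assms(1,2)] by blast
  have "rho W R s S" using rho_mono_ord[OF assms(3) s(2)] .
  then show ?thesis by (rule rho_succ[OF s(1), THEN iffD1])
qed

end




definition dset :: "nat rel \<Rightarrow> nat set \<Rightarrow> nat set \<Rightarrow> bool" where
  "dset L F D \<longleftrightarrow> D \<subseteq> F \<and> (\<forall>x\<in>D. \<forall>y\<in>F. (y,x) \<in> L \<longrightarrow> y \<in> D)"

definition gap :: "nat rel \<Rightarrow> nat set \<Rightarrow> nat set \<Rightarrow> nat set" where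
  "gap L F D = {x \<in> Field L - F. \<forall>y\<in>F. ((y,x) \<in> L \<longleftrightarrow> y \<in> D)}"

lemma lin_facts:
  assumes "Linear_order L"
  shows "\<And>x. x \<in> Field L \<Longrightarrow> (x,x) \<in> L"
    and "\<And>x y z. (x,y) \<in> L \<Longrightarrow> (y,z) \<in> L \<Longrightarrow> (x,z) \<in> L"
    and "\<And>x y. (x,y) \<in> L \<Longrightarrow> (y,x) \<in> L \<Longrightarrow> x = y"
    and "\<And>x y. x \<in> Field L \<Longrightarrow> y \<in> Field L \<Longrightarrow> x \<noteq> y \<Longrightarrow> (x,y) \<in> L \<or> (y,x) \<in> L"
  using assms unfolding linear_order_on_def partial_order_on_def preorder_on_def refl_on_def
    total_on_def antisym_def trans_def by blast+

locale LO = fixes L :: "nat rel" assumes lo: "Linear_order L"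
begin

lemma reflL: "x \<in> Field L \<Longrightarrow> (x,x) \<in> L" using lin_facts[OF lo] by blast
lemma transL: "(x,y) \<in> L \<Longrightarrow> (y,z) \<in> L \<Longrightarrow> (x,z) \<in> L" using lin_facts[OF lo] by blast
lemma antiL: "(x,y) \<in> L \<Longrightarrow> (y,x) \<in> L \<Longrightarrow> x = y" using lin_facts[OF lo] by blast
lemma totalL: "x \<in> Field L \<Longrightarrow> y \<in> Field L \<Longrightarrow> x \<noteq> y \<Longrightarrow> (x,y) \<in> L \<or> (y,x) \<in> L"
  using lin_facts[OF lo] by blast

lemma PE1:
  assumes pe: "prime_ext L F B" and FL: "F \<subseteq> Field L"
  shows "\<exists>n. n \<notin> F \<and> Field B = insert n F \<and> dset L F {y\<in>F. (y,n) \<in> B} \<and>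
     (\<forall>C. realization L F B C \<longleftrightarrow> (\<exists>c\<in>gap L F {y\<in>F. (y,n) \<in> B}. C = insert c F))"
proof -
  have linB: "Linear_order B" and FB: "F \<subseteq> Field B" and c1: "card (Field B - F) = 1"
    and agree: "\<And>x y. x \<in> F \<Longrightarrow> y \<in> F \<Longrightarrow> (x, y) \<in> B \<longleftrightarrow> (x, y) \<in> L"
    using pe unfolding prime_ext_def by auto
  note B = lin_facts[OF linB]
  obtain n where n: "Field B - F = {n}" using c1 by (metis card_1_singletonE)
  have nF: "n \<notin> F" and FBn: "Field B = insert n F" using n FB by auto
  define D where "D = {y\<in>F. (y,n) \<in> B}"
  have ds: "dset L F D" unfolding dset_def D_def
  proof (intro conjI ballI impI)
    fix x y assume "x \<in> {y \<in> F. (y, n) \<in> B}" "y \<in> F" "(y, x) \<in> L"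
    then show "y \<in> {y \<in> F. (y, n) \<in> B}" using agree B(2) by blast
  qed auto
  have rl: "realization L F B C \<longleftrightarrow> (\<exists>c\<in>gap L F D. C = insert c F)" for C
  proof
    assume "realization L F B C"
    then obtain g where FC: "F \<subseteq> C" and CL: "C \<subseteq> Field L" and bij: "bij_betw g (Field B) C"
      and fx: "\<forall>x\<in>F. g x = x"
      and iso: "\<forall>x\<in>Field B. \<forall>y\<in>Field B. (x, y) \<in> B \<longleftrightarrow> (g x, g y) \<in> L"
      unfolding realization_def by blast
    have Cim: "C = g ` Field B" using bij by (simp add: bij_betw_def)
    have gF: "g ` F = F" using fx by force
    have Ceq: "C = insert (g n) F" using Cim gF FBn by auto
    have inj: "inj_on g (Field B)" using bij by (simp add: bij_betw_def)
    have gnF: "g n \<notin> F"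
    proof
      assume "g n \<in> F"
      then have "g (g n) = g n" using fx by blast
      then have "g n = n" using inj FBn \<open>g n \<in> F\<close> unfolding inj_on_def by blast
      then show False using \<open>g n \<in> F\<close> nF by simp
    qed
    have gnL: "g n \<in> Field L" using CL Ceq by auto
    have "\<forall>y\<in>F. ((y, g n) \<in> L \<longleftrightarrow> y \<in> D)"
    proof
      fix y assume y: "y \<in> F"
      have "(y, n) \<in> B \<longleftrightarrow> (g y, g n) \<in> L" using iso y FBn by blast
      then show "((y, g n) \<in> L \<longleftrightarrow> y \<in> D)" using fx y unfolding D_def by auto
    qed
    then have "g n \<in> gap L F D" unfolding gap_def using gnF gnL by blast
    then show "\<exists>c\<in>gap L F D. C = insert c F" using Ceq by blast
  next
    assume "\<exists>c\<in>gap L F D. C = insert c F"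
    then obtain c where cg: "c \<in> gap L F D" and C: "C = insert c F" by blast
    have cL: "c \<in> Field L" and cF: "c \<notin> F" and cD: "\<And>y. y \<in> F \<Longrightarrow> (y,c) \<in> L \<longleftrightarrow> y \<in> D"
      using cg unfolding gap_def by auto
    define g where "g = (\<lambda>x. if x = n then c else x)"
    have bij: "bij_betw g (Field B) C"
      unfolding bij_betw_def inj_on_def C FBn g_def using nF cF by auto
    have fx: "\<forall>x\<in>F. g x = x" using nF g_def by auto
    have iso: "\<forall>x\<in>Field B. \<forall>y\<in>Field B. (x, y) \<in> B \<longleftrightarrow> (g x, g y) \<in> L"
    proof (intro ballI)
      fix x y assume x: "x \<in> Field B" and y: "y \<in> Field B"
      show "(x, y) \<in> B \<longleftrightarrow> (g x, g y) \<in> L"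
      proof (cases "x = n")
        case xn: True
        show ?thesis
        proof (cases "y = n")
          case True
          then show ?thesis using xn B(1) x reflL cL g_def by auto
        next
          case False
          then have yF: "y \<in> F" using y FBn by auto
          have gy: "g y = y" "g x = c" using False xn g_def by auto
          have "(x,y) \<in> B \<longleftrightarrow> (y,n) \<notin> B" using B(3,4) x y False xn by blast
          moreover have "(c,y) \<in> L \<longleftrightarrow> (y,c) \<notin> L" using antiL totalL cL yF FL cF by blast
          ultimately show ?thesis using gy cD[OF yF] xn unfolding D_def using yF by auto
        qed
      next
        case xn: False
        then have xF: "x \<in> F" using x FBn by auto
        show ?thesis
        proof (cases "y = n")
          case True
          then show ?thesis using xn xF cD[OF xF] g_def unfolding D_def by auto
        next
          case False
          then have yF: "y \<in> F" using y FBn by auto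
          then show ?thesis using xn False xF agree g_def by auto
        qed
      qed
    qed
    have "F \<subseteq> C" "C \<subseteq> Field L" using C FL cL by auto
    then show "realization L F B C" unfolding realization_def using bij fx iso by blast
  qed
  show ?thesis using nF FBn ds rl unfolding D_def by blast
qed

lemma PE2:
  assumes ds: "dset L F D" and fin: "finite F" and FL: "F \<subseteq> Field L"
  shows "\<exists>B n. prime_ext L F B \<and> n \<notin> F \<and> Field B = insert n F \<and> {y\<in>F. (y,n) \<in> B} = D"
proof -
  obtain n :: nat where nF: "n \<notin> F" using fin infinite_UNIV_nat ex_new_if_finite by blast
  have DF: "D \<subseteq> F" and dcl: "\<And>x y. x \<in> D \<Longrightarrow> y \<in> F \<Longrightarrow> (y,x) \<in> L \<Longrightarrow> y \<in> D"
    using ds unfolding dset_def by auto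
  define B where "B = {(x,y). x \<in> F \<and> y \<in> F \<and> (x,y) \<in> L} \<union> {(x,n)| x. x \<in> D}
     \<union> {(n,y)| y. y \<in> F - D} \<union> {(n,n)}"
  have FB: "Field B = insert n F"
  proof
    show "Field B \<subseteq> insert n F" unfolding B_def Field_def using DF by auto
    show "insert n F \<subseteq> Field B"
    proof
      fix x assume "x \<in> insert n F"
      then show "x \<in> Field B"
      proof
        assume "x = n" then show ?thesis unfolding B_def Field_def by auto
      next
        assume "x \<in> F" then have "(x,x) \<in> B" unfolding B_def using FL reflL by auto
        then show ?thesis by (rule FieldI1)
      qed
    qed
  qed
  have tr: "trans B" unfolding trans_def
  proof (intro allI impI)
    fix x y z assume xy: "(x,y) \<in> B" and yz: "(y,z) \<in> B"
    show "(x,z) \<in> B"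
    proof (cases "x = n")
      case xn: True
      show ?thesis
      proof (cases "y = n")
        case True then show ?thesis using yz xn by simp
      next
        case False
        then have "y \<in> F - D" using xy xn nF unfolding B_def by auto
        moreover have "z = n \<or> (z \<in> F \<and> (y,z) \<in> L)" using yz False nF unfolding B_def by auto
        ultimately show ?thesis using xn dcl unfolding B_def by auto
      qed
    next
      case xn: False
      then have xF: "x \<in> F" using xy DF unfolding B_def by auto
      show ?thesis
      proof (cases "y = n")
        case yn: True
        then have xD: "x \<in> D" using xy xn nF unfolding B_def by auto
        show ?thesis
        proof (cases "z = n")
          case True then show ?thesis using xD yn unfolding B_def by auto
        next
          case False
          then have zF: "z \<in> F - D" using yz yn nF unfolding B_def by auto
          have "x \<noteq> z" using xD zF by auto
          then have "(x,z) \<in> L \<or> (z,x) \<in> L" using totalL FL xF zF by blast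
          then have "(x,z) \<in> L" using dcl xD zF by blast
          then show ?thesis using xF zF unfolding B_def by auto
        qed
      next
        case yn: False
        then have xyL: "(x,y) \<in> L" "y \<in> F" using xy xn unfolding B_def by auto
        show ?thesis
        proof (cases "z = n")
          case True
          then have "y \<in> D" using yz yn nF unfolding B_def by auto
          then have "x \<in> D" using dcl xyL xF by blast
          then show ?thesis using True unfolding B_def by auto
        next
          case False
          then have "(y,z) \<in> L" "z \<in> F" using yz yn unfolding B_def by auto
          then show ?thesis using xyL xF transL unfolding B_def by blast
        qed
      qed
    qed
  qed
  have an: "antisym B" unfolding antisym_def
  proof (intro allI impI)
    fix x y assume "(x,y) \<in> B" "(y,x) \<in> B"
    then show "x = y" unfolding B_def using antiL nF DF by auto
  qed
  have rf: "refl_on (Field B) B" unfolding refl_on_def FB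
  proof
    fix x assume "x \<in> insert n F"
    then show "(x,x) \<in> B" unfolding B_def using reflL FL by auto
  qed
  have to: "total_on (Field B) B" unfolding total_on_def FB
  proof (intro ballI impI)
    fix x y assume x: "x \<in> insert n F" and y: "y \<in> insert n F" and ne: "x \<noteq> y"
    show "(x, y) \<in> B \<or> (y, x) \<in> B"
    proof (cases "x = n \<or> y = n")
      case True then show ?thesis using x y ne unfolding B_def by auto
    next
      case False
      then have "x \<in> F" "y \<in> F" using x y by auto
      then show ?thesis using totalL FL ne unfolding B_def by blast
    qed
  qed
  have sub: "B \<subseteq> Field B \<times> Field B" by (auto intro: FieldI1 FieldI2)
  have lin: "Linear_order B"
    unfolding linear_order_on_def partial_order_on_def preorder_on_def using sub rf tr an to by blast
  have "Field B - F = {n}" using FB nF by auto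
  then have "card (Field B - F) = 1" by simp
  moreover have "\<forall>x\<in>F. \<forall>y\<in>F. (x, y) \<in> B \<longleftrightarrow> (x, y) \<in> L" unfolding B_def using nF by auto
  moreover have "finite (Field B)" using FB fin by simp
  ultimately have "prime_ext L F B" unfolding prime_ext_def using lin FB by auto
  moreover have "{y\<in>F. (y,n) \<in> B} = D" unfolding B_def using nF DF by auto
  ultimately show ?thesis using nF FB by blast
qed

lemma rk_succ2:
  assumes w: "WO W" and p: "is_pred W b a" and fin: "finite F" and FL: "F \<subseteq> Field L"
  shows "rk_ge W L a F \<longleftrightarrow> (\<forall>D. dset L F D \<longrightarrow> (\<exists>c\<in>gap L F D. rk_ge W L b (insert c F)))"
proof
  assume h: "rk_ge W L a F"
  show "\<forall>D. dset L F D \<longrightarrow> (\<exists>c\<in>gap L F D. rk_ge W L b (insert c F))"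
  proof (intro allI impI)
    fix D assume ds: "dset L F D"
    obtain B n where B: "prime_ext L F B" "n \<notin> F" "Field B = insert n F" "{y\<in>F. (y,n) \<in> B} = D"
      using PE2[OF ds fin FL] by blast
    obtain C where C: "realization L F B C" "rk_ge W L b C"
      using h WO.rk_succ[OF w p, of L F] B(1) by blast
    obtain n' where n': "n' \<notin> F" "Field B = insert n' F"
      "\<forall>C. realization L F B C \<longleftrightarrow> (\<exists>c\<in>gap L F {y\<in>F. (y,n') \<in> B}. C = insert c F)"
      using PE1[OF B(1) FL] by blast
    have "n \<in> insert n' F" using B(3) n'(2) by auto
    then have nn: "n' = n" using B(2) by auto
    obtain c where c: "c \<in> gap L F {y\<in>F. (y,n') \<in> B}" "C = insert c F"
      using n'(3)[rule_format, of C] C(1) by blast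
    then show "\<exists>c\<in>gap L F D. rk_ge W L b (insert c F)" using C(2) B(4) nn by blast
  qed
next
  assume h: "\<forall>D. dset L F D \<longrightarrow> (\<exists>c\<in>gap L F D. rk_ge W L b (insert c F))"
  have "\<forall>B. prime_ext L F B \<longrightarrow> (\<exists>C. realization L F B C \<and> rk_ge W L b C)"
  proof (intro allI impI)
    fix B assume B: "prime_ext L F B"
    obtain n where n: "n \<notin> F" "Field B = insert n F" "dset L F {y\<in>F. (y,n) \<in> B}"
      "\<forall>C. realization L F B C \<longleftrightarrow> (\<exists>c\<in>gap L F {y\<in>F. (y,n) \<in> B}. C = insert c F)"
      using PE1[OF B FL] by blast
    obtain c where c: "c \<in> gap L F {y\<in>F. (y,n) \<in> B}" "rk_ge W L b (insert c F)"
      using h n(3) by blast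
    have "realization L F B (insert c F)" using n(4) c(1) by blast
    then show "\<exists>C. realization L F B C \<and> rk_ge W L b C" using c(2) by blast
  qed
  then show "rk_ge W L a F" using WO.rk_succ[OF w p, of L F] by blast
qed

end




context LO begin

lemma G1: assumes c: "c \<in> gap L F D" and ds: "dset L F D"
  shows "dset L (insert c F) D \<and> gap L (insert c F) D = lowr L (gap L F D) c"
proof -
  have cL: "c \<in> Field L" and cF: "c \<notin> F" and cD: "\<And>y. y \<in> F \<Longrightarrow> (y,c) \<in> L \<longleftrightarrow> y \<in> D"
    using c unfolding gap_def by auto
  have DF: "D \<subseteq> F" using ds unfolding dset_def by auto
  have d1: "dset L (insert c F) D" unfolding dset_def
  proof (intro conjI ballI impI)
    show "D \<subseteq> insert c F" using DF by auto
    fix x y assume x: "x \<in> D" and y: "y \<in> insert c F" and yx: "(y,x) \<in> L"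
    show "y \<in> D"
    proof (cases "y = c")
      case True
      have "(x,c) \<in> L" using cD x DF by auto
      then have "x = c" using antiL yx True by blast
      then show ?thesis using x DF cF by auto
    next
      case False then show ?thesis using y x yx ds unfolding dset_def by auto
    qed
  qed
  have "gap L (insert c F) D = lowr L (gap L F D) c"
  proof
    show "gap L (insert c F) D \<subseteq> lowr L (gap L F D) c"
    proof
      fix x assume x: "x \<in> gap L (insert c F) D"
      then have xL: "x \<in> Field L" and xc: "x \<noteq> c" and ncx: "(c,x) \<notin> L" using cF DF
        unfolding gap_def by auto
      have "(x,c) \<in> L" using totalL[OF xL cL xc] ncx by blast
      then show "x \<in> lowr L (gap L F D) c" using x xc unfolding lowr_def gap_def by auto
    qed
    show "lowr L (gap L F D) c \<subseteq> gap L (insert c F) D"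
    proof
      fix x assume x: "x \<in> lowr L (gap L F D) c"
      then have xc: "(x,c) \<in> L" "x \<noteq> c" unfolding lowr_def by auto
      then have "(c,x) \<notin> L" using antiL by blast
      then show "x \<in> gap L (insert c F) D" using x xc cF DF unfolding lowr_def gap_def by auto
    qed
  qed
  then show ?thesis using d1 by blast
qed

lemma G2: assumes c: "c \<in> gap L F D" and ds: "dset L F D"
  shows "dset L (insert c F) (insert c D) \<and> gap L (insert c F) (insert c D) = uppr L (gap L F D) c"
proof -
  have cL: "c \<in> Field L" and cF: "c \<notin> F" and cD: "\<And>y. y \<in> F \<Longrightarrow> (y,c) \<in> L \<longleftrightarrow> y \<in> D"
    using c unfolding gap_def by auto
  have DF: "D \<subseteq> F" using ds unfolding dset_def by auto
  have d1: "dset L (insert c F) (insert c D)" unfolding dset_def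
  proof (intro conjI ballI impI)
    show "insert c D \<subseteq> insert c F" using DF by auto
    fix x y assume x: "x \<in> insert c D" and y: "y \<in> insert c F" and yx: "(y,x) \<in> L"
    show "y \<in> insert c D"
    proof (cases "y = c")
      case True then show ?thesis by simp
    next
      case yc: False
      then have yF: "y \<in> F" using y by auto
      show ?thesis
      proof (cases "x = c")
        case True then show ?thesis using cD yF yx by auto
      next
        case False then show ?thesis using x yF yx ds unfolding dset_def by auto
      qed
    qed
  qed
  have "gap L (insert c F) (insert c D) = uppr L (gap L F D) c"
  proof
    show "gap L (insert c F) (insert c D) \<subseteq> uppr L (gap L F D) c"
    proof
      fix x assume x: "x \<in> gap L (insert c F) (insert c D)"
      then have xc: "x \<noteq> c" and cx: "(c,x) \<in> L" unfolding gap_def by auto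
      have "\<forall>y\<in>F. ((y,x) \<in> L \<longleftrightarrow> y \<in> D)" using x cF unfolding gap_def by auto
      then show "x \<in> uppr L (gap L F D) c" using x xc cx unfolding uppr_def gap_def by auto
    qed
    show "uppr L (gap L F D) c \<subseteq> gap L (insert c F) (insert c D)"
    proof
      fix x assume x: "x \<in> uppr L (gap L F D) c"
      then have xg: "x \<in> Field L" "x \<notin> F" "\<forall>y\<in>F. ((y,x) \<in> L \<longleftrightarrow> y \<in> D)" "(c,x) \<in> L" "x \<noteq> c"
        unfolding uppr_def gap_def by auto
      have "\<forall>y\<in>insert c F. ((y,x) \<in> L \<longleftrightarrow> y \<in> insert c D)" using xg cF by auto
      then show "x \<in> gap L (insert c F) (insert c D)" using xg unfolding gap_def by auto
    qed
  qed
  then show ?thesis using d1 by blast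
qed

lemma G3: assumes c: "c \<in> gap L F D" and ds: "dset L F D" and ds': "dset L (insert c F) D'"
  and ne: "D' - {c} \<noteq> D" and FL: "F \<subseteq> Field L"
  shows "dset L F (D' - {c}) \<and> gap L (insert c F) D' = gap L F (D' - {c})"
proof -
  have cL: "c \<in> Field L" and cF: "c \<notin> F" and cD: "\<And>y. y \<in> F \<Longrightarrow> (y,c) \<in> L \<longleftrightarrow> y \<in> D"
    using c unfolding gap_def by auto
  have DF: "D \<subseteq> F" and dcl: "\<And>x y. x \<in> D \<Longrightarrow> y \<in> F \<Longrightarrow> (y,x) \<in> L \<Longrightarrow> y \<in> D"
    using ds unfolding dset_def by auto
  have D'F: "D' \<subseteq> insert c F" and dcl': "\<And>x y. x \<in> D' \<Longrightarrow> y \<in> insert c F \<Longrightarrow> (y,x) \<in> L \<Longrightarrow> y \<in> D'"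
    using ds' unfolding dset_def by auto
  define E where "E = D' - {c}"
  have EF: "E \<subseteq> F" using D'F E_def by auto
  have dE: "dset L F E" unfolding dset_def E_def using D'F dcl' cF by auto
  have key: "x \<noteq> c \<and> ((c,x) \<in> L \<longleftrightarrow> c \<in> D')" if x: "x \<in> gap L F E" for x
  proof -
    have xL: "x \<in> Field L" and xE: "\<And>y. y \<in> F \<Longrightarrow> (y,x) \<in> L \<longleftrightarrow> y \<in> E" using x unfolding gap_def by auto
    obtain y where y: "y \<in> F" "(y \<in> E \<and> y \<notin> D) \<or> (y \<in> D \<and> y \<notin> E)"
      using ne EF DF unfolding E_def by blast
    have xc: "x \<noteq> c"
    proof
      assume "x = c" then show False using y xE cD by blast
    qed
    moreover have "((c,x) \<in> L \<longleftrightarrow> c \<in> D')"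
    proof (cases "y \<in> E \<and> y \<notin> D")
      case True
      have yx: "(y,x) \<in> L" using xE y True by blast
      have "(y,c) \<notin> L" using cD y True by blast
      moreover have "y \<noteq> c" using y cF by auto
      ultimately have cy: "(c,y) \<in> L" using totalL FL y(1) cL by blast
      then have "(c,x) \<in> L" using yx transL by blast
      moreover have "c \<in> D'" using dcl'[of y c] True cy unfolding E_def by auto
      ultimately show ?thesis by blast
    next
      case False
      then have yD: "y \<in> D" "y \<notin> E" using y by auto
      have "(y,x) \<notin> L" using xE y yD by blast
      moreover have "y \<noteq> x" using y yD x unfolding gap_def by auto
      ultimately have xy: "(x,y) \<in> L" using totalL FL y(1) xL by blast
      have yc: "(y,c) \<in> L" using cD y yD by blast
      have "(c,x) \<notin> L"
      proof
        assume "(c,x) \<in> L"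
        then have "(c,y) \<in> L" using xy transL by blast
        then have "c = y" using yc antiL by blast
        then show False using y cF by auto
      qed
      moreover have "c \<notin> D'"
      proof
        assume "c \<in> D'"
        then have "y \<in> D'" using dcl'[of c y] yc y by auto
        then show False using yD y cF unfolding E_def by auto
      qed
      ultimately show ?thesis by blast
    qed
    ultimately show ?thesis by blast
  qed
  have "gap L (insert c F) D' = gap L F E"
  proof
    show "gap L (insert c F) D' \<subseteq> gap L F E"
      unfolding gap_def E_def using cF by auto
    show "gap L F E \<subseteq> gap L (insert c F) D'"
    proof
      fix x assume x: "x \<in> gap L F E"
      then have "x \<noteq> c" "(c,x) \<in> L \<longleftrightarrow> c \<in> D'" using key by auto
      moreover have "\<forall>y\<in>F. ((y,x) \<in> L \<longleftrightarrow> y \<in> D')" using x cF unfolding gap_def E_def by auto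
      ultimately show "x \<in> gap L (insert c F) D'" using x unfolding gap_def by auto
    qed
  qed
  then show ?thesis using dE E_def by simp
qed

theorem decomp:
  assumes w: "WO W"
  shows "finite F \<Longrightarrow> F \<subseteq> Field L \<Longrightarrow>
    rk_ge W L a F \<longleftrightarrow> (\<forall>D. dset L F D \<longrightarrow> rho W L a (gap L F D))"
proof (induction a arbitrary: F rule: wf_induct[OF WO.wf[OF w]])
  case (1 a)
  note fin = "1.prems"(1) and FL = "1.prems"(2)
  show ?case
  proof (cases "\<exists>b. (b, a) \<in> W \<and> b \<noteq> a")
    case False
    then show ?thesis using WO.rk_zero[OF w False] WO.rho_zero[OF w False] by blast
  next
    case ex: True
    show ?thesis
    proof (cases "\<exists>b. is_pred W b a")
      case True
      then obtain b where p: "is_pred W b a" by blast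
      then have bW: "(b,a) \<in> W - Id" unfolding is_pred_def by auto
      have IHb: "rk_ge W L b (insert c F) \<longleftrightarrow>
          (\<forall>D'. dset L (insert c F) D' \<longrightarrow> rho W L b (gap L (insert c F) D'))"
        if "c \<in> Field L" for c
        using "1.IH"[rule_format, OF bW, of "insert c F"] fin FL that by auto
      have rs: "rho W L a G \<longleftrightarrow> (\<exists>c\<in>G. rho W L b (lowr L G c) \<and> rho W L b (uppr L G c))" for G
        using WO.rho_succ[OF w p] .
      show ?thesis
      proof
        assume h: "rk_ge W L a F"
        show "\<forall>D. dset L F D \<longrightarrow> rho W L a (gap L F D)"
        proof (intro allI impI)
          fix D assume ds: "dset L F D"
          obtain c where c: "c \<in> gap L F D" "rk_ge W L b (insert c F)"
            using rk_succ2[OF w p fin FL] h ds by blast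
          have cL: "c \<in> Field L" using c unfolding gap_def by auto
          have all: "\<forall>D'. dset L (insert c F) D' \<longrightarrow> rho W L b (gap L (insert c F) D')"
            using IHb[OF cL] c(2) by blast
          have "rho W L b (lowr L (gap L F D) c)" using G1[OF c(1) ds] all by metis
          moreover have "rho W L b (uppr L (gap L F D) c)" using G2[OF c(1) ds] all by metis
          ultimately show "rho W L a (gap L F D)" using rs c(1) by blast
        qed
      next
        assume h: "\<forall>D. dset L F D \<longrightarrow> rho W L a (gap L F D)"
        have "\<forall>D. dset L F D \<longrightarrow> (\<exists>c\<in>gap L F D. rk_ge W L b (insert c F))"
        proof (intro allI impI)
          fix D assume ds: "dset L F D"
          obtain c where c: "c \<in> gap L F D" "rho W L b (lowr L (gap L F D) c)"
            "rho W L b (uppr L (gap L F D) c)"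
            using h ds rs by blast
          have cL: "c \<in> Field L" and cF: "c \<notin> F" using c unfolding gap_def by auto
          have DF: "D \<subseteq> F" using ds unfolding dset_def by auto
          have "\<forall>D'. dset L (insert c F) D' \<longrightarrow> rho W L b (gap L (insert c F) D')"
          proof (intro allI impI)
            fix D' assume ds': "dset L (insert c F) D'"
            show "rho W L b (gap L (insert c F) D')"
            proof (cases "D' - {c} = D")
              case True
              have "D' \<subseteq> insert c F" using ds' unfolding dset_def by auto
              then have "D' = D \<or> D' = insert c D" using True cF DF by blast
              then show ?thesis using G1[OF c(1) ds] G2[OF c(1) ds] c(2,3) by metis
            next
              case False
              have g3: "dset L F (D' - {c}) \<and> gap L (insert c F) D' = gap L F (D' - {c})"
                using G3[OF c(1) ds ds' False FL] .
              then have "rho W L a (gap L F (D' - {c}))" using h by blast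
              then have "rho W L b (gap L F (D' - {c}))"
                using WO.rho_mono_ord[OF w] bW by blast
              then show ?thesis using g3 by simp
            qed
          qed
          then show "\<exists>c\<in>gap L F D. rk_ge W L b (insert c F)" using IHb[OF cL] c(1) by blast
        qed
        then show "rk_ge W L a F" using rk_succ2[OF w p fin FL] by blast
      qed
    next
      case False
      have "rk_ge W L a F \<longleftrightarrow> (\<forall>b. (b, a) \<in> W \<and> b \<noteq> a \<longrightarrow> rk_ge W L b F)"
        using WO.rk_lim[OF w ex False] .
      also have "\<dots> \<longleftrightarrow> (\<forall>b. (b, a) \<in> W \<and> b \<noteq> a \<longrightarrow> (\<forall>D. dset L F D \<longrightarrow> rho W L b (gap L F D)))"
        using "1.IH" fin FL by blast
      also have "\<dots> \<longleftrightarrow> (\<forall>D. dset L F D \<longrightarrow> (\<forall>b. (b, a) \<in> W \<and> b \<noteq> a \<longrightarrow> rho W L b (gap L F D)))"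
        by blast
      also have "\<dots> \<longleftrightarrow> (\<forall>D. dset L F D \<longrightarrow> rho W L a (gap L F D))"
        using WO.rho_lim[OF w ex False] by blast
      finally show ?thesis .
    qed
  qed
qed

lemma rank_char:
  assumes w: "WO W"
  shows "rk_ge W L a {} \<longleftrightarrow> rho W L a (Field L)"
proof -
  have "dset L {} D \<longleftrightarrow> D = {}" for D unfolding dset_def by auto
  moreover have "gap L {} {} = Field L" unfolding gap_def by auto
  ultimately show ?thesis using decomp[OF w, of "{}" a] by simp
qed

end




datatype 'w entry = Lim 'w | Lft | Mid | Rgt

fun elt :: "'w rel \<Rightarrow> 'w entry \<Rightarrow> 'w entry \<Rightarrow> bool" where
  "elt W (Lim a) (Lim b) = ((a,b) \<in> W \<and> a \<noteq> b)"
| "elt W (Lim a) Lft = True"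
| "elt W (Lim a) Mid = True"
| "elt W (Lim a) Rgt = True"
| "elt W Lft Mid = True"
| "elt W Lft Rgt = True"
| "elt W Mid Rgt = True"
| "elt W _ _ = False"

definition EE :: "'w rel \<Rightarrow> ('w entry \<times> 'w entry) set" where
  "EE W = {(x,y). elt W x y}"

definition R0 :: "'w rel \<Rightarrow> ('w entry list) rel" where
  "R0 W = {(x,y). x = y \<or> (x,y) \<in> lexord (EE W)}"

fun valid :: "'w rel \<Rightarrow> 'w \<Rightarrow> 'w entry list \<Rightarrow> bool" where
  "valid W g [] = False"
| "valid W g (Mid # xs) = (xs = [] \<and> (\<exists>b. is_pred W b g))"
| "valid W g (Lft # xs) = ((\<exists>b. is_pred W b g) \<and> valid W (THE b. is_pred W b g) xs)"
| "valid W g (Rgt # xs) = ((\<exists>b. is_pred W b g) \<and> valid W (THE b. is_pred W b g) xs)"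
| "valid W g (Lim b # xs) = (\<not> (\<exists>b. is_pred W b g) \<and> (b,g) \<in> W \<and> b \<noteq> g \<and> valid W b xs)"

lemma irrefl_EE: "irrefl (EE W)"
  unfolding irrefl_def EE_def
proof (intro allI)
  fix x :: "'a entry" show "(x, x) \<notin> {(x, y). elt W x y}" by (cases x) auto
qed

lemma R0_app: "(p @ xs, p @ ys) \<in> R0 W \<and> p @ xs \<noteq> p @ ys \<longleftrightarrow> (xs, ys) \<in> lexord (EE W)"
proof -
  have "(xs, ys) \<in> lexord (EE W) \<Longrightarrow> xs \<noteq> ys"
    using lexord_irreflexive[of "EE W"] irrefl_EE unfolding irrefl_def by blast
  moreover have "(p @ xs, p @ ys) \<in> lexord (EE W) \<longleftrightarrow> (xs, ys) \<in> lexord (EE W)"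
    using lexord_same_pref_if_irrefl[OF irrefl_EE] .
  ultimately show ?thesis unfolding R0_def by auto
qed

lemma lowr_app: "p @ xs \<in> lowr (R0 W) S (p @ ys) \<longleftrightarrow> p @ xs \<in> S \<and> (xs, ys) \<in> lexord (EE W)"
  unfolding lowr_def using R0_app by blast
lemma uppr_app: "p @ xs \<in> uppr (R0 W) S (p @ ys) \<longleftrightarrow> p @ xs \<in> S \<and> (ys, xs) \<in> lexord (EE W)"
  unfolding uppr_def using R0_app by blast

context WO begin

lemma LB: "(a,g) \<in> W \<Longrightarrow> (\<lambda>xs. p @ xs) ` {xs. valid W g xs} \<subseteq> S \<Longrightarrow> rho W (R0 W) a S"
proof (induction a arbitrary: g p S rule: wf_induct[OF wf])
  case (1 a)
  note ag = "1.prems"(1) and sub = "1.prems"(2)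
  show ?case
  proof (cases "\<exists>b. (b, a) \<in> W \<and> b \<noteq> a")
    case False then show ?thesis by (rule rho_zero)
  next
    case ex: True
    show ?thesis
    proof (cases "\<exists>b. is_pred W b a")
      case True
      then obtain b where b: "is_pred W b a" by blast
      then have bW: "(b,a) \<in> W - Id" unfolding is_pred_def by auto
      show ?thesis
      proof (cases "\<exists>h. is_pred W h g")
        case True
        then obtain h where h: "is_pred W h g" by blast
        have "(b,g) \<in> W" using transW[OF _ ag] bW by auto
        moreover have "b \<noteq> g" using ag bW antiW by auto
        ultimately have bh: "(b,h) \<in> W" using below_pred[OF h] by blast
        have vg: "valid W g (e # xs) \<longleftrightarrow> valid W h xs" if "e = Lft \<or> e = Rgt" for e xs
          using that h the_pred by auto
        have "valid W g [Mid]" using h by auto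
        then have cS: "p @ [Mid] \<in> S" using sub by blast
        have l: "(\<lambda>xs. (p @ [Lft]) @ xs) ` {xs. valid W h xs} \<subseteq> lowr (R0 W) S (p @ [Mid])"
        proof
          fix x assume "x \<in> (\<lambda>xs. (p @ [Lft]) @ xs) ` {xs. valid W h xs}"
          then obtain xs where x: "x = p @ (Lft # xs)" "valid W h xs" by auto
          have "valid W g (Lft # xs)" using vg[of Lft xs] x(2) by auto
          then have "x \<in> S" using sub x(1) by blast
          then show "x \<in> lowr (R0 W) S (p @ [Mid])" using x(1) lowr_app[of p "Lft # xs" W S "[Mid]"] by (simp add: EE_def)
        qed
        have u: "(\<lambda>xs. (p @ [Rgt]) @ xs) ` {xs. valid W h xs} \<subseteq> uppr (R0 W) S (p @ [Mid])"
        proof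
          fix x assume "x \<in> (\<lambda>xs. (p @ [Rgt]) @ xs) ` {xs. valid W h xs}"
          then obtain xs where x: "x = p @ (Rgt # xs)" "valid W h xs" by auto
          have "valid W g (Rgt # xs)" using vg[of Rgt xs] x(2) by auto
          then have "x \<in> S" using sub x(1) by blast
          then show "x \<in> uppr (R0 W) S (p @ [Mid])" using x(1) uppr_app[of p "Rgt # xs" W S "[Mid]"] by (simp add: EE_def)
        qed
        have "rho W (R0 W) b (lowr (R0 W) S (p @ [Mid]))" using "1.IH"[rule_format, OF bW bh l] .
        moreover have "rho W (R0 W) b (uppr (R0 W) S (p @ [Mid]))" using "1.IH"[rule_format, OF bW bh u] .
        ultimately show ?thesis using rho_succ[OF b, of "R0 W" S] cS by blast
      next
        case False
        have ag': "a \<noteq> g" using False b by auto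
        have bb: "(b,b) \<in> W" using refl inF1 bW by auto
        have va: "valid W a (e # xs) \<longleftrightarrow> valid W b xs" if "e = Lft \<or> e = Rgt" for e xs
          using that b the_pred by auto
        have "valid W g [Lim a, Mid]" using False ag ag' b by auto
        then have cS: "p @ [Lim a, Mid] \<in> S" using sub by blast
        have l: "(\<lambda>xs. (p @ [Lim a, Lft]) @ xs) ` {xs. valid W b xs} \<subseteq> lowr (R0 W) S (p @ [Lim a, Mid])"
        proof
          fix x assume "x \<in> (\<lambda>xs. (p @ [Lim a, Lft]) @ xs) ` {xs. valid W b xs}"
          then obtain xs where x: "x = p @ (Lim a # Lft # xs)" "valid W b xs" by auto
          have "valid W g (Lim a # Lft # xs)" using va[of Lft xs] x(2) False ag ag' by auto
          then have "x \<in> S" using sub x(1) by blast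
          then show "x \<in> lowr (R0 W) S (p @ [Lim a, Mid])" using x(1) lowr_app[of p "Lim a # Lft # xs" W S "[Lim a, Mid]"] by (simp add: EE_def)
        qed
        have u: "(\<lambda>xs. (p @ [Lim a, Rgt]) @ xs) ` {xs. valid W b xs} \<subseteq> uppr (R0 W) S (p @ [Lim a, Mid])"
        proof
          fix x assume "x \<in> (\<lambda>xs. (p @ [Lim a, Rgt]) @ xs) ` {xs. valid W b xs}"
          then obtain xs where x: "x = p @ (Lim a # Rgt # xs)" "valid W b xs" by auto
          have "valid W g (Lim a # Rgt # xs)" using va[of Rgt xs] x(2) False ag ag' by auto
          then have "x \<in> S" using sub x(1) by blast
          then show "x \<in> uppr (R0 W) S (p @ [Lim a, Mid])" using x(1) uppr_app[of p "Lim a # Rgt # xs" W S "[Lim a, Mid]"] by (simp add: EE_def)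
        qed
        have "rho W (R0 W) b (lowr (R0 W) S (p @ [Lim a, Mid]))" using "1.IH"[rule_format, OF bW bb l] .
        moreover have "rho W (R0 W) b (uppr (R0 W) S (p @ [Lim a, Mid]))" using "1.IH"[rule_format, OF bW bb u] .
        ultimately show ?thesis using rho_succ[OF b, of "R0 W" S] cS by blast
      qed
    next
      case False
      have "\<forall>b. (b, a) \<in> W \<and> b \<noteq> a \<longrightarrow> rho W (R0 W) b S"
      proof (intro allI impI)
        fix b assume "(b, a) \<in> W \<and> b \<noteq> a"
        then show "rho W (R0 W) b S" using "1.IH"[rule_format, of b g p S] transW ag sub by blast
      qed
      then show ?thesis using rho_lim[OF ex False, of "R0 W" S] by blast
    qed
  qed
qed

lemma valid_pred_cases: assumes "is_pred W h g" "valid W g xs"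
  shows "xs = [Mid] \<or> (\<exists>t. xs = Lft # t \<and> valid W h t) \<or> (\<exists>t. xs = Rgt # t \<and> valid W h t)"
proof (cases xs)
  case Nil then show ?thesis using assms by simp
next
  case (Cons e t)
  then show ?thesis using assms the_pred[OF assms(1)] by (cases e) auto
qed

lemma valid_nopred_cases: assumes "\<not> (\<exists>h. is_pred W h g)" "valid W g xs"
  shows "\<exists>\<beta> t. xs = Lim \<beta> # t \<and> (\<beta>,g) \<in> W \<and> \<beta> \<noteq> g \<and> valid W \<beta> t"
proof (cases xs)
  case Nil then show ?thesis using assms by simp
next
  case (Cons e t)
  then show ?thesis using assms by (cases e) auto
qed

definition Zs :: "'w \<Rightarrow> 'w entry list set" where
  "Zs g = {Lim \<beta> # t | \<beta> t. (\<beta>,g) \<in> W \<and> valid W \<beta> t}"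

lemma Zs_low: assumes sub: "S \<subseteq> (\<lambda>xs. p @ xs) ` Zs g" and c: "c = p @ (Lim \<beta> # t)" and bg: "(\<beta>,g) \<in> W"
  shows "lowr (R0 W) S c \<subseteq> (\<lambda>xs. p @ xs) ` Zs \<beta>"
proof
  fix x assume x: "x \<in> lowr (R0 W) S c"
  then have "x \<in> S" unfolding lowr_def by auto
  then obtain \<beta>' t' where x1: "x = p @ (Lim \<beta>' # t')" "(\<beta>',g) \<in> W" "valid W \<beta>' t'"
    using sub unfolding Zs_def by auto
  have "(Lim \<beta>' # t', Lim \<beta> # t) \<in> lexord (EE W)"
    using x x1(1) c lowr_app[of p "Lim \<beta>' # t'" W S "Lim \<beta> # t"] by simp
  then have "(\<beta>',\<beta>) \<in> W \<and> \<beta>' \<noteq> \<beta> \<or> \<beta>' = \<beta>" by (auto simp add: EE_def)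
  then have "(\<beta>',\<beta>) \<in> W" using refl inF1 bg by auto
  then show "x \<in> (\<lambda>xs. p @ xs) ` Zs \<beta>" using x1 unfolding Zs_def by auto
qed

lemma UB: "(\<forall>a p S. (g,a) \<in> W \<and> g \<noteq> a \<longrightarrow> S \<subseteq> (\<lambda>xs. p @ xs) ` {xs. valid W g xs} \<longrightarrow> \<not> rho W (R0 W) a S) \<and>
  (\<forall>a p S s. is_pred W g s \<and> (s,a) \<in> W \<and> s \<noteq> a \<longrightarrow> S \<subseteq> (\<lambda>xs. p @ xs) ` Zs g \<longrightarrow> \<not> rho W (R0 W) a S)"
proof (induction g rule: wf_induct[OF wf])
  case (1 g)
  have U: "\<not> rho W (R0 W) a S" if ga: "(g,a) \<in> W" and ne: "g \<noteq> a"
    and sub: "S \<subseteq> (\<lambda>xs. p @ xs) ` {xs. valid W g xs}" for a p S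
  proof
    assume r: "rho W (R0 W) a S"
    obtain c where c: "c \<in> S" "rho W (R0 W) g (lowr (R0 W) S c)" "rho W (R0 W) g (uppr (R0 W) S c)"
      using rho_key[OF ga ne r] by blast
    obtain xs where xs: "c = p @ xs" "valid W g xs" using c(1) sub by auto
    show False
    proof (cases "\<exists>h. is_pred W h g")
      case True
      then obtain h where h: "is_pred W h g" by blast
      then have hW: "(h,g) \<in> W - Id" unfolding is_pred_def by auto
      have IHh: "\<And>p S. S \<subseteq> (\<lambda>xs. p @ xs) ` {xs. valid W h xs} \<Longrightarrow> \<not> rho W (R0 W) g S"
        using "1.IH"[rule_format, OF hW, THEN conjunct1] hW by blast
      have cs: "xs = [Mid] \<or> (\<exists>t. xs = Lft # t \<and> valid W h t) \<or> (\<exists>t. xs = Rgt # t \<and> valid W h t)"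
        using valid_pred_cases[OF h xs(2)] .
      show False
      proof (cases "\<exists>t. xs = Rgt # t \<and> valid W h t")
        case True
        then obtain t where t: "xs = Rgt # t" by blast
        have "uppr (R0 W) S c \<subseteq> (\<lambda>ys. (p @ [Rgt]) @ ys) ` {ys. valid W h ys}"
        proof
          fix x assume x: "x \<in> uppr (R0 W) S c"
          then have "x \<in> S" unfolding uppr_def by auto
          then obtain ys where ys: "x = p @ ys" "valid W g ys" using sub by auto
          have lx: "(xs, ys) \<in> lexord (EE W)"
            using x ys(1) xs(1) uppr_app[of p ys W S xs] by simp
          have "ys = [Mid] \<or> (\<exists>t. ys = Lft # t \<and> valid W h t) \<or> (\<exists>t. ys = Rgt # t \<and> valid W h t)"
            using valid_pred_cases[OF h ys(2)] .
          then obtain t' where "ys = Rgt # t'" "valid W h t'" using lx t by (auto simp: EE_def)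
          then show "x \<in> (\<lambda>ys. (p @ [Rgt]) @ ys) ` {ys. valid W h ys}" using ys(1) by auto
        qed
        then show False using IHh c(3) by blast
      next
        case False
        then have cs2: "xs = [Mid] \<or> (\<exists>t. xs = Lft # t)" using cs by blast
        have "lowr (R0 W) S c \<subseteq> (\<lambda>ys. (p @ [Lft]) @ ys) ` {ys. valid W h ys}"
        proof
          fix x assume x: "x \<in> lowr (R0 W) S c"
          then have "x \<in> S" unfolding lowr_def by auto
          then obtain ys where ys: "x = p @ ys" "valid W g ys" using sub by auto
          have lx: "(ys, xs) \<in> lexord (EE W)"
            using x ys(1) xs(1) lowr_app[of p ys W S xs] by simp
          have "ys = [Mid] \<or> (\<exists>t. ys = Lft # t \<and> valid W h t) \<or> (\<exists>t. ys = Rgt # t \<and> valid W h t)"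
            using valid_pred_cases[OF h ys(2)] .
          then obtain t' where "ys = Lft # t'" "valid W h t'" using lx cs2 by (auto simp: EE_def)
          then show "x \<in> (\<lambda>ys. (p @ [Lft]) @ ys) ` {ys. valid W h ys}" using ys(1) by auto
        qed
        then show False using IHh c(2) by blast
      qed
    next
      case False
      obtain \<beta> t where bt: "xs = Lim \<beta> # t" "(\<beta>,g) \<in> W" "\<beta> \<noteq> g" "valid W \<beta> t"
        using valid_nopred_cases[OF False xs(2)] by blast
      have bW: "(\<beta>,g) \<in> W - Id" using bt by auto
      obtain s where s: "is_pred W \<beta> s" "(s,g) \<in> W" using succ_ex[OF bt(2,3)] by blast
      have sg: "s \<noteq> g" using s(1) False by blast
      have sub2: "S \<subseteq> (\<lambda>xs. p @ xs) ` Zs g"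
      proof
        fix x assume "x \<in> S"
        then obtain ys where ys: "x = p @ ys" "valid W g ys" using sub by auto
        obtain \<beta>' t' where "ys = Lim \<beta>' # t'" "(\<beta>',g) \<in> W" "valid W \<beta>' t'"
          using valid_nopred_cases[OF False ys(2)] by blast
        then have "ys \<in> Zs g" unfolding Zs_def by blast
        then show "x \<in> (\<lambda>xs. p @ xs) ` Zs g" using ys(1) by blast
      qed
      have "lowr (R0 W) S c \<subseteq> (\<lambda>xs. p @ xs) ` Zs \<beta>" using Zs_low[OF sub2 _ bt(2)] xs(1) bt(1) by blast
      moreover have IHb: "\<And>a p S s. is_pred W \<beta> s \<Longrightarrow> (s,a) \<in> W \<Longrightarrow> s \<noteq> a \<Longrightarrow>
          S \<subseteq> (\<lambda>xs. p @ xs) ` Zs \<beta> \<Longrightarrow> \<not> rho W (R0 W) a S"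
        using "1.IH"[rule_format, OF bW, THEN conjunct2] by blast
      ultimately show False using IHb[OF s(1) s(2) sg] c(2) by blast
    qed
  qed
  have V: "\<not> rho W (R0 W) a S" if ps: "is_pred W g s" and sa: "(s,a) \<in> W" "s \<noteq> a"
    and sub: "S \<subseteq> (\<lambda>xs. p @ xs) ` Zs g" for a p S s
  proof
    assume r: "rho W (R0 W) a S"
    obtain c where c: "c \<in> S" "rho W (R0 W) s (lowr (R0 W) S c)" "rho W (R0 W) s (uppr (R0 W) S c)"
      using rho_key[OF sa r] by blast
    obtain \<beta> t where bt: "c = p @ (Lim \<beta> # t)" "(\<beta>,g) \<in> W" "valid W \<beta> t"
      using c(1) sub unfolding Zs_def by auto
    have gs: "(g,s) \<in> W" "g \<noteq> s" using ps unfolding is_pred_def by auto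
    show False
    proof (cases "\<beta> = g")
      case True
      have subU: "uppr (R0 W) S c \<subseteq> (\<lambda>ys. (p @ [Lim g]) @ ys) ` {ys. valid W g ys}"
      proof
        fix x assume x: "x \<in> uppr (R0 W) S c"
        then have "x \<in> S" unfolding uppr_def by auto
        then obtain \<beta>' t' where x1: "x = p @ (Lim \<beta>' # t')" "(\<beta>',g) \<in> W" "valid W \<beta>' t'"
          using sub unfolding Zs_def by auto
        have "(Lim \<beta> # t, Lim \<beta>' # t') \<in> lexord (EE W)"
          using x x1(1) bt(1) uppr_app[of p "Lim \<beta>' # t'" W S "Lim \<beta> # t"] by simp
        then have "(g,\<beta>') \<in> W \<and> g \<noteq> \<beta>' \<or> \<beta>' = g" using True by (auto simp: EE_def)
        then have bg: "\<beta>' = g" using x1(2) antiW by blast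
        then have "x = (p @ [Lim g]) @ t'" using x1(1) by simp
        moreover have "t' \<in> {ys. valid W g ys}" using x1(3) bg by simp
        ultimately show "x \<in> (\<lambda>ys. (p @ [Lim g]) @ ys) ` {ys. valid W g ys}" by blast
      qed
      then show False using U[OF gs subU] c(3) by blast
    next
      case False
      then have bW: "(\<beta>,g) \<in> W - Id" using bt by auto
      obtain s' where s': "is_pred W \<beta> s'" "(s',g) \<in> W" using succ_ex[OF bt(2) False] by blast
      have s's: "(s',s) \<in> W" using transW[OF s'(2) gs(1)] .
      have "s' \<noteq> s" using s'(2) gs antiW by blast
      have "lowr (R0 W) S c \<subseteq> (\<lambda>xs. p @ xs) ` Zs \<beta>" using Zs_low[OF sub bt(1) bt(2)] .
      moreover have IHb: "\<And>a p S s. is_pred W \<beta> s \<Longrightarrow> (s,a) \<in> W \<Longrightarrow> s \<noteq> a \<Longrightarrow>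
          S \<subseteq> (\<lambda>xs. p @ xs) ` Zs \<beta> \<Longrightarrow> \<not> rho W (R0 W) a S"
        using "1.IH"[rule_format, OF bW, THEN conjunct2] by blast
      ultimately show False using IHb[OF s'(1) s's \<open>s' \<noteq> s\<close>] c(2) by blast
    qed
  qed
  show ?case using U V by blast
qed

end




lemma Field_ext2: "Field (ext2 r) = Inl ` Field r \<union> {Inr False, Inr True}"
  unfolding ext2_def Field_def by (auto simp: image_iff)

lemma WO_ext2: assumes wo: "Well_order r" shows "WO (ext2 r)"
proof -
  have lr: "Linear_order r" using wo by (simp add: well_order_on_def)
  note R = lin_facts[OF lr]
  have wfr: "wf (r - Id)" using wo by (simp add: well_order_on_def)
  let ?W = "ext2 r"
  have mem: "(u,v) \<in> ?W \<longleftrightarrow> (case (u,v) of (Inl x, Inl y) \<Rightarrow> (x,y) \<in> r | (Inl x, Inr b) \<Rightarrow> x \<in> Field r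
     | (Inr a, Inl y) \<Rightarrow> False | (Inr a, Inr b) \<Rightarrow> (a \<longrightarrow> b))" for u v
    unfolding ext2_def by (cases u; cases v) auto
  have rf: "refl_on (Field ?W) ?W" unfolding refl_on_def Field_ext2
    using R(1) by (auto simp: mem)
  have tr: "trans ?W" unfolding trans_def
  proof (intro allI impI)
    fix x y z assume "(x,y) \<in> ?W" "(y,z) \<in> ?W"
    then show "(x,z) \<in> ?W" using R(2) by (cases x; cases y; cases z) (auto simp: mem intro: FieldI1)
  qed
  have an: "antisym ?W" unfolding antisym_def
  proof (intro allI impI)
    fix x y assume "(x,y) \<in> ?W" "(y,x) \<in> ?W"
    then show "x = y" using R(3) by (cases x; cases y) (auto simp: mem)
  qed
  have to: "total_on (Field ?W) ?W" unfolding total_on_def Field_ext2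
  proof (intro ballI impI)
    fix x y assume "x \<in> Inl ` Field r \<union> {Inr False, Inr True}" "y \<in> Inl ` Field r \<union> {Inr False, Inr True}" "x \<noteq> y"
    then show "(x,y) \<in> ?W \<or> (y,x) \<in> ?W" using R(4) by (cases x; cases y) (auto simp: mem)
  qed
  have sub: "?W \<subseteq> Field ?W \<times> Field ?W" by (auto intro: FieldI1 FieldI2)
  define key :: "'a + bool \<Rightarrow> nat \<times> 'a" where
    "key = (\<lambda>u. case u of Inl x \<Rightarrow> (0, x) | Inr False \<Rightarrow> (1, undefined) | Inr True \<Rightarrow> (2, undefined))"
  have "?W - Id \<subseteq> inv_image (less_than <*lex*> (r - Id)) key"
  proof
    fix p assume p: "p \<in> ?W - Id"
    obtain u v where uv: "p = (u,v)" by (cases p)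
    show "p \<in> inv_image (less_than <*lex*> (r - Id)) key"
      using p unfolding uv key_def by (cases u; cases v) (auto simp: mem split: bool.splits)
  qed
  then have "wf (?W - Id)" using wf_subset wf_inv_image wf_lex_prod wf_less_than wfr by metis
  then have "Well_order ?W"
    unfolding well_order_on_def linear_order_on_def partial_order_on_def preorder_on_def
    using sub rf tr an to by blast
  then show ?thesis by (simp add: WO_def)
qed

lemma lex_total:
  assumes tot: "\<forall>a\<in>A. \<forall>b\<in>A. a = b \<or> (a,b) \<in> E \<or> (b,a) \<in> E"
  shows "set xs \<subseteq> A \<Longrightarrow> set ys \<subseteq> A \<Longrightarrow> xs = ys \<or> (xs,ys) \<in> lexord E \<or> (ys,xs) \<in> lexord E"
proof (induction xs arbitrary: ys)
  case Nil then show ?case by (cases ys) auto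
next
  case (Cons x xs)
  then show ?case using tot by (cases ys) auto
qed

context WO begin

lemma valid_set: "valid W g xs \<Longrightarrow> set xs \<subseteq> Lim ` Field W \<union> {Lft, Mid, Rgt}"
proof (induction xs arbitrary: g)
  case Nil then show ?case by simp
next
  case (Cons e xs)
  then show ?case by (cases e) (auto intro: inF1)
qed

lemma EE_total: "\<forall>a\<in>Lim ` Field W \<union> {Lft, Mid, Rgt}. \<forall>b\<in>Lim ` Field W \<union> {Lft, Mid, Rgt}.
    a = b \<or> (a,b) \<in> EE W \<or> (b,a) \<in> EE W"
  unfolding EE_def
proof (intro ballI)
  fix a b assume "a \<in> Lim ` Field W \<union> {Lft, Mid, Rgt}" "b \<in> Lim ` Field W \<union> {Lft, Mid, Rgt}"
  then show "a = b \<or> (a, b) \<in> {(x, y). elt W x y} \<or> (b, a) \<in> {(x, y). elt W x y}"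
    using total by (cases a; cases b) auto
qed

lemma EE_trans: "trans (EE W)"
  unfolding trans_def EE_def
proof (intro allI impI)
  fix x y z :: "'w entry" assume "(x,y) \<in> {(x, y). elt W x y}" "(y,z) \<in> {(x, y). elt W x y}"
  then show "(x,z) \<in> {(x, y). elt W x y}"
    using transW antiW by (cases x; cases y; cases z) auto
qed

definition RX :: "'w \<Rightarrow> 'w entry list rel" where
  "RX g = {(x,y). valid W g x \<and> valid W g y \<and> (x,y) \<in> R0 W}"

lemma Field_RX: "Field (RX g) = {xs. valid W g xs}"
proof
  show "Field (RX g) \<subseteq> {xs. valid W g xs}" by (auto simp: RX_def Field_iff)
  show "{xs. valid W g xs} \<subseteq> Field (RX g)"
  proof
    fix x assume "x \<in> {xs. valid W g xs}"
    then have "(x,x) \<in> RX g" unfolding RX_def R0_def by auto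
    then show "x \<in> Field (RX g)" by (rule FieldI1)
  qed
qed

lemma lin_RX: "Linear_order (RX g)"
proof -
  have irr: "(x,x) \<notin> lexord (EE W)" for x
    using lexord_irreflexive[of "EE W"] irrefl_EE unfolding irrefl_def by blast
  have lt: "(x,y) \<in> lexord (EE W) \<Longrightarrow> (y,z) \<in> lexord (EE W) \<Longrightarrow> (x,z) \<in> lexord (EE W)" for x y z
    using lexord_trans EE_trans by blast
  have rf: "refl_on (Field (RX g)) (RX g)" unfolding refl_on_def Field_RX unfolding RX_def R0_def by auto
  have tr: "trans (RX g)" unfolding trans_def RX_def R0_def using lt by blast
  have an: "antisym (RX g)" unfolding antisym_def RX_def R0_def using lt irr by blast
  have to: "total_on (Field (RX g)) (RX g)" unfolding total_on_def Field_RX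
  proof (intro ballI impI)
    fix x y assume x: "x \<in> {xs. valid W g xs}" and y: "y \<in> {xs. valid W g xs}" and "x \<noteq> y"
    then have "(x,y) \<in> lexord (EE W) \<or> (y,x) \<in> lexord (EE W)"
      using lex_total[OF EE_total valid_set valid_set] by blast
    then show "(x, y) \<in> RX g \<or> (y, x) \<in> RX g" using x y unfolding RX_def R0_def by auto
  qed
  have sub: "RX g \<subseteq> Field (RX g) \<times> Field (RX g)" by (auto intro: FieldI1 FieldI2)
  show ?thesis unfolding linear_order_on_def partial_order_on_def preorder_on_def
    using sub rf tr an to by blast
qed

lemma transfer:
  assumes inj: "inj_on f X"
  shows "S \<subseteq> X \<Longrightarrow> rho W (dir_image {(x,y). x \<in> X \<and> y \<in> X \<and> (x,y) \<in> R} f) a (f ` S) \<longleftrightarrow> rho W R a S"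
proof (induction a arbitrary: S rule: wf_induct[OF wf])
  case (1 a)
  let ?L = "dir_image {(x,y). x \<in> X \<and> y \<in> X \<and> (x,y) \<in> R} f"
  have rel: "(f x, f y) \<in> ?L \<longleftrightarrow> (x,y) \<in> R" if "x \<in> X" "y \<in> X" for x y
  proof
    assume "(f x, f y) \<in> ?L"
    then obtain u v where "f x = f u" "f y = f v" "u \<in> X" "v \<in> X" "(u,v) \<in> R"
      unfolding dir_image_def by auto
    then show "(x,y) \<in> R" using inj that unfolding inj_on_def by metis
  next
    assume "(x,y) \<in> R" then show "(f x, f y) \<in> ?L" using that unfolding dir_image_def by auto
  qed
  have lw: "lowr ?L (f ` S) (f c) = f ` lowr R S c" if "c \<in> S" for c
  proof -
    have cX: "c \<in> X" using that "1.prems" by auto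
    show ?thesis unfolding lowr_def
    proof (intro equalityI subsetI)
      fix z assume "z \<in> {x \<in> f ` S. (x, f c) \<in> ?L \<and> x \<noteq> f c}"
      then obtain x where "z = f x" "x \<in> S" "(f x, f c) \<in> ?L" "f x \<noteq> f c" by auto
      then show "z \<in> f ` {x \<in> S. (x, c) \<in> R \<and> x \<noteq> c}" using rel cX "1.prems" by auto
    next
      fix z assume "z \<in> f ` {x \<in> S. (x, c) \<in> R \<and> x \<noteq> c}"
      then obtain x where "z = f x" "x \<in> S" "(x, c) \<in> R" "x \<noteq> c" by auto
      moreover have "f x \<noteq> f c" using inj cX \<open>x \<in> S\<close> "1.prems" \<open>x \<noteq> c\<close> unfolding inj_on_def by auto
      ultimately show "z \<in> {x \<in> f ` S. (x, f c) \<in> ?L \<and> x \<noteq> f c}" using rel cX "1.prems" by auto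
    qed
  qed
  have up: "uppr ?L (f ` S) (f c) = f ` uppr R S c" if "c \<in> S" for c
  proof -
    have cX: "c \<in> X" using that "1.prems" by auto
    show ?thesis unfolding uppr_def
    proof (intro equalityI subsetI)
      fix z assume "z \<in> {x \<in> f ` S. (f c, x) \<in> ?L \<and> x \<noteq> f c}"
      then obtain x where "z = f x" "x \<in> S" "(f c, f x) \<in> ?L" "f x \<noteq> f c" by auto
      then show "z \<in> f ` {x \<in> S. (c, x) \<in> R \<and> x \<noteq> c}" using rel cX "1.prems" by auto
    next
      fix z assume "z \<in> f ` {x \<in> S. (c, x) \<in> R \<and> x \<noteq> c}"
      then obtain x where "z = f x" "x \<in> S" "(c, x) \<in> R" "x \<noteq> c" by auto
      moreover have "f x \<noteq> f c" using inj cX \<open>x \<in> S\<close> "1.prems" \<open>x \<noteq> c\<close> unfolding inj_on_def by auto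
      ultimately show "z \<in> {x \<in> f ` S. (f c, x) \<in> ?L \<and> x \<noteq> f c}" using rel cX "1.prems" by auto
    qed
  qed
  show ?case
  proof (cases "\<exists>b. (b, a) \<in> W \<and> b \<noteq> a")
    case False then show ?thesis using rho_zero[OF False, of ?L "f ` S"] rho_zero[OF False, of R S] by blast
  next
    case ex: True
    show ?thesis
    proof (cases "\<exists>b. is_pred W b a")
      case True
      then obtain b where b: "is_pred W b a" by blast
      then have bW: "(b,a) \<in> W - Id" unfolding is_pred_def by auto
      have IH: "\<And>T. T \<subseteq> X \<Longrightarrow> rho W ?L b (f ` T) \<longleftrightarrow> rho W R b T"
        using "1.IH"[rule_format, OF bW] by blast
      have "rho W ?L a (f ` S) \<longleftrightarrow> (\<exists>c'\<in>f ` S. rho W ?L b (lowr ?L (f ` S) c') \<and> rho W ?L b (uppr ?L (f ` S) c'))"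
        using rho_succ[OF b, of ?L "f ` S"] .
      also have "\<dots> \<longleftrightarrow> (\<exists>c\<in>S. rho W ?L b (lowr ?L (f ` S) (f c)) \<and> rho W ?L b (uppr ?L (f ` S) (f c)))"
        by blast
      also have "\<dots> \<longleftrightarrow> (\<exists>c\<in>S. rho W R b (lowr R S c) \<and> rho W R b (uppr R S c))"
      proof -
        have e1: "rho W ?L b (lowr ?L (f ` S) (f c)) \<longleftrightarrow> rho W R b (lowr R S c)" if "c \<in> S" for c
        proof -
          have sx: "lowr R S c \<subseteq> X" using "1.prems" unfolding lowr_def by auto
          show ?thesis unfolding lw[OF that] using IH[OF sx] .
        qed
        have e2: "rho W ?L b (uppr ?L (f ` S) (f c)) \<longleftrightarrow> rho W R b (uppr R S c)" if "c \<in> S" for c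
        proof -
          have sx: "uppr R S c \<subseteq> X" using "1.prems" unfolding uppr_def by auto
          show ?thesis unfolding up[OF that] using IH[OF sx] .
        qed
        show ?thesis using e1 e2 by blast
      qed
      also have "\<dots> \<longleftrightarrow> rho W R a S" using rho_succ[OF b, of R S] by simp
      finally show ?thesis .
    next
      case False
      have "rho W ?L a (f ` S) \<longleftrightarrow> (\<forall>b. (b, a) \<in> W \<and> b \<noteq> a \<longrightarrow> rho W ?L b (f ` S))"
        using rho_lim[OF ex False, of ?L "f ` S"] .
      also have "\<dots> \<longleftrightarrow> (\<forall>b. (b, a) \<in> W \<and> b \<noteq> a \<longrightarrow> rho W R b S)"
        using "1.IH" "1.prems" by blast
      also have "\<dots> \<longleftrightarrow> rho W R a S" using rho_lim[OF ex False, of R S] by simp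
      finally show ?thesis .
    qed
  qed
qed

end

theorem corollary6p14:
  fixes r :: "'a rel"
  assumes "Well_order r" and "countable (Field r)"
  shows "\<exists>L :: nat rel. Linear_order L \<and> countable (Field L) \<and> rank_eq L r"
proof -
  define W where "W = ext2 r"
  have w: "WO W" unfolding W_def using WO_ext2[OF assms(1)] .
  define X where "X = {xs. valid W (Inr False) xs}"
  define A where "A = Lim ` Field W \<union> {Lft, Mid, Rgt}"
  have "countable (Field W)" unfolding W_def Field_ext2 using assms(2) by simp
  then have "countable A" unfolding A_def by simp
  moreover have "X \<subseteq> lists A" unfolding X_def A_def using WO.valid_set[OF w] by blast
  ultimately have cX: "countable X" using countable_subset by (metis countable_lists)
  define f where "f = to_nat_on X"
  have inj: "inj_on f X" unfolding f_def using cX by (rule inj_on_to_nat_on)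
  define L where "L = dir_image (WO.RX W (Inr False)) f"
  have RXe: "WO.RX W (Inr False) = {(x,y). x \<in> X \<and> y \<in> X \<and> (x,y) \<in> R0 W}"
    unfolding WO.RX_def[OF w] X_def by auto
  have FRX: "Field (WO.RX W (Inr False)) = X" unfolding X_def using WO.Field_RX[OF w] .
  have lin: "Linear_order L" unfolding L_def
    using Linear_order_dir_image[OF WO.lin_RX[OF w, of "Inr False"], of f] inj unfolding FRX by blast
  have FL: "Field L = f ` X" unfolding L_def dir_image_Field FRX ..
  have lo: "LO L" using lin by (simp add: LO_def)
  have rk: "rk_ge W L a {} \<longleftrightarrow> rho W (R0 W) a X" for a
  proof -
    have "rk_ge W L a {} \<longleftrightarrow> rho W L a (Field L)" using LO.rank_char[OF lo w] .
    also have "\<dots> \<longleftrightarrow> rho W L a (f ` X)" using FL by simp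
    also have "\<dots> \<longleftrightarrow> rho W (R0 W) a X" unfolding L_def RXe
      using WO.transfer[OF w inj, of X "R0 W" a] by simp
    finally show ?thesis .
  qed
  have ff: "(Inr False, Inr False) \<in> W" and ft: "(Inr False, Inr True) \<in> W"
    unfolding W_def ext2_def by auto
  have sX: "(\<lambda>xs. [] @ xs) ` X \<subseteq> X" by simp
  have "rho W (R0 W) (Inr False) X"
    using WO.LB[OF w ff] sX unfolding X_def by blast
  moreover have "\<not> rho W (R0 W) (Inr True) X"
  proof -
    have U: "\<And>a p S. (Inr False, a) \<in> W \<Longrightarrow> Inr False \<noteq> a \<Longrightarrow>
        S \<subseteq> (\<lambda>xs. p @ xs) ` {xs. valid W (Inr False) xs} \<Longrightarrow> \<not> rho W (R0 W) a S"
      using WO.UB[OF w, THEN conjunct1] by blast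
    have sX2: "{xs. valid W (Inr False) xs} \<subseteq> (\<lambda>xs. [] @ xs) ` {xs. valid W (Inr False) xs}" by simp
    have ne: "(Inr False :: 'a + bool) \<noteq> Inr True" by simp
    show ?thesis using U[OF ft ne sX2] unfolding X_def .
  qed
  ultimately have "rank_eq L r" unfolding rank_eq_def using rk unfolding W_def by simp
  moreover have "countable (Field L)" by simp
  ultimately show ?thesis using lin by blast
qed


end
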